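(* Let $f\in\mathbb{Z}_2[x]$. Let $\sigma$ be a cycle of $f_n$ ($n\ge1$) that grows, and suppose that some cycle $\tau$ of $f_m$, $m>n$, lying above $\sigma$ also grows (the cycles lying above $\sigma$ at intermediate levels may split). Then every cycle lying above $\tau$, at every level $>m$, grows; i.e. $\tau$ grows forever.
   Context: $f_n$ is the induced map on $\mathbb{Z}/2^n\mathbb{Z}$, $f_n(x\bmod 2^n)=f(x)\bmod 2^n$. A $k$-cycle of $f_n$ is a tuple $\sigma=(x_1,\dots,x_k)$ of distinct elements with $f_n(x_i)=x_{i+1}$, $f_n(x_k)=x_1$. A cycle $\tau$ of $f_m$, $m\ge n$, lies above $\sigma$ if every point of $\tau$ reduces mod $2^n$ into $\sigma$. The lifts of $\sigma$ are the cycles of $f_{n+1}$ in $\{y:y\bmod 2^n\in\sigma\}$; $\sigma$ grows if this set is a single cycle of length $2k$ and splits if it is the union of two cycles of length $k$. *)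

theory Defs
  imports Main
begin

text \<open>2-adic integers as the inverse limit of the rings Z/2^n Z: a 2-adic integer is a
  compatible sequence of residues a n in {0..<2^n}.\<close>
definition is_Z2 :: "(nat \<Rightarrow> int) \<Rightarrow> bool" where
  "is_Z2 a \<longleftrightarrow> (\<forall>n. 0 \<le> a n \<and> a n < 2 ^ n) \<and> (\<forall>n. a (Suc n) mod 2 ^ n = a n)"

text \<open>A polynomial in Z_2[x] is a list of 2-adic coefficients (constant term first).\<close>
definition is_Z2_poly :: "(nat \<Rightarrow> int) list \<Rightarrow> bool" where
  "is_Z2_poly cs \<longleftrightarrow> (\<forall>c\<in>set cs. is_Z2 c)"

definition fmap :: "(nat \<Rightarrow> int) list \<Rightarrow> nat \<Rightarrow> int \<Rightarrow> int" where
  "fmap cs n x = (\<Sum>i<length cs. (cs ! i) n * x ^ i) mod 2 ^ n"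

definition is_cycle :: "(nat \<Rightarrow> int) list \<Rightarrow> nat \<Rightarrow> int set \<Rightarrow> bool" where
  "is_cycle cs n S \<longleftrightarrow> (\<exists>x. 0 \<le> x \<and> x < 2 ^ n \<and> (\<exists>k>0. (fmap cs n ^^ k) x = x)
       \<and> S = {(fmap cs n ^^ i) x | i. True})"

definition lies_above :: "(nat \<Rightarrow> int) list \<Rightarrow> nat \<Rightarrow> int set \<Rightarrow> nat \<Rightarrow> int set \<Rightarrow> bool" where
  "lies_above cs n S m T \<longleftrightarrow> n \<le> m \<and> is_cycle cs m T \<and> (\<forall>y\<in>T. y mod 2 ^ n \<in> S)"

definition lift_set :: "nat \<Rightarrow> int set \<Rightarrow> int set" where
  "lift_set n S = {y. 0 \<le> y \<and> y < 2 ^ Suc n \<and> y mod 2 ^ n \<in> S}"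

definition grows :: "(nat \<Rightarrow> int) list \<Rightarrow> nat \<Rightarrow> int set \<Rightarrow> bool" where
  "grows cs n S \<longleftrightarrow> is_cycle cs (Suc n) (lift_set n S) \<and> card (lift_set n S) = 2 * card S"

end

theory Submission
  imports Defs "HOL-Number_Theory.Cong"
begin


definition per :: "('a \<Rightarrow> 'a) \<Rightarrow> 'a \<Rightarrow> nat \<Rightarrow> bool" where
  "per h x p \<longleftrightarrow> p > 0 \<and> (h ^^ p) x = x \<and> (\<forall>i. 0 < i \<and> i < p \<longrightarrow> (h ^^ i) x \<noteq> x)"

lemma per_exists:
  assumes "(h ^^ q) x = x" "q > 0"
  shows "\<exists>p. per h x p"
proof -
  let ?P = "\<lambda>p. p > 0 \<and> (h ^^ p) x = x"
  have "?P (LEAST p. ?P p)" by (rule LeastI[of ?P q]) (use assms in auto)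
  moreover have "\<forall>i. 0 < i \<and> i < (LEAST p. ?P p) \<longrightarrow> (h ^^ i) x \<noteq> x"
    using not_less_Least[of _ ?P] by blast
  ultimately show ?thesis unfolding per_def by blast
qed

lemma funpow_mult_fix:
  assumes "(h ^^ p) x = x" shows "(h ^^ (p * c)) x = x"
proof (induction c)
  case 0 then show ?case by simp
next
  case (Suc c)
  have e: "p * Suc c = p * c + p" by simp
  have "(h ^^ (p * Suc c)) x = (h ^^ (p*c)) ((h ^^ p) x)"
    by (simp only: e funpow_add comp_apply)
  then show ?case using Suc assms by simp
qed

lemma per_mod:
  assumes "per h x p" shows "(h ^^ a) x = (h ^^ (a mod p)) x"
proof -
  have "(h ^^ a) x = (h ^^ (a mod p + p * (a div p))) x" by simp
  also have "\<dots> = (h ^^ (a mod p)) ((h ^^ (p * (a div p))) x)"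
    by (simp only: funpow_add comp_apply)
  finally have "(h ^^ a) x = (h ^^ (a mod p)) ((h ^^ (p * (a div p))) x)" .
  then show ?thesis using funpow_mult_fix[where h=h and p=p and x=x] assms unfolding per_def by simp
qed

lemma per_dvd:
  assumes "per h x p" shows "(h ^^ a) x = x \<longleftrightarrow> p dvd a"
proof
  assume ha: "(h ^^ a) x = x"
  have m: "(h ^^ a) x = (h ^^ (a mod p)) x" by (rule per_mod[OF assms])
  have hm: "(h ^^ (a mod p)) x = x" using m ha by (rule subst)
  have p0: "p > 0" and mins: "\<forall>i. 0 < i \<and> i < p \<longrightarrow> (h ^^ i) x \<noteq> x"
    using assms unfolding per_def by auto
  have "a mod p < p" using p0 by (rule mod_less_divisor)
  then have "\<not> (0 < a mod p)" using mins[rule_format, of "a mod p"] hm by auto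
  then show "p dvd a" by (simp add: dvd_eq_mod_eq_0)
next
  assume "p dvd a"
  then obtain c where ac: "a = p * c" by auto
  have "(h ^^ p) x = x" using assms unfolding per_def by simp
  then have "(h ^^ (p * c)) x = x" by (rule funpow_mult_fix)
  then show "(h ^^ a) x = x" using ac by simp
qed

lemma per_orbit_image:
  assumes "per h x p" shows "{(h ^^ i) x | i. True} = (\<lambda>i. (h ^^ i) x) ` {..<p}"
proof -
  have "p > 0" using assms unfolding per_def by simp
  show ?thesis
  proof
    show "{(h ^^ i) x | i. True} \<subseteq> (\<lambda>i. (h ^^ i) x) ` {..<p}"
    proof
      fix z assume "z \<in> {(h ^^ i) x | i. True}"
      then obtain a where "z = (h ^^ a) x" by auto
      then have "z = (h ^^ (a mod p)) x" using per_mod[OF assms, of a] by simp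
      moreover have "a mod p \<in> {..<p}" using \<open>p > 0\<close> by simp
      ultimately show "z \<in> (\<lambda>i. (h ^^ i) x) ` {..<p}" by blast
    qed
  qed auto
qed

lemma per_card:
  assumes "per h x p" shows "card {(h ^^ i) x | i. True} = p"
proof -
  have inj: "inj_on (\<lambda>i. (h ^^ i) x) {..<p}"
  proof (rule inj_onI, rule ccontr)
    fix i j assume i: "i \<in> {..<p}" and j: "j \<in> {..<p}" and e: "(h ^^ i) x = (h ^^ j) x" and ne: "i \<noteq> j"
    have key: "\<And>i j. i < j \<Longrightarrow> j < p \<Longrightarrow> (h ^^ i) x = (h ^^ j) x \<Longrightarrow> False"
    proof -
      fix i j assume ij: "i < j" "j < p" and e: "(h ^^ i) x = (h ^^ j) x"
      have "(h ^^ ((p - j) + i)) x = (h ^^ (p - j)) ((h ^^ i) x)" by (simp add: funpow_add)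
      also have "\<dots> = (h ^^ (p - j)) ((h ^^ j) x)" using e by simp
      also have "\<dots> = (h ^^ ((p - j) + j)) x" by (simp add: funpow_add)
      also have "\<dots> = (h ^^ p) x" using ij by simp
      also have "\<dots> = x" using assms unfolding per_def by simp
      finally have "(h ^^ ((p - j) + i)) x = x" .
      moreover have "0 < (p - j) + i" "(p - j) + i < p" using ij by auto
      ultimately show False using assms unfolding per_def by blast
    qed
    show False using i j e ne key[of i j] key[of j i] by (auto simp: linorder_neq_iff)
  qed
  show ?thesis unfolding per_orbit_image[OF assms] using card_image[OF inj] by simp
qed

lemma funpow_comm: "(h ^^ a) ((h ^^ b) z) = (h ^^ b) ((h ^^ a) z)"
proof -
  have "(h ^^ a) ((h ^^ b) z) = (h ^^ (a + b)) z" by (simp add: funpow_add)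
  also have "\<dots> = (h ^^ (b + a)) z" by (simp add: add.commute)
  also have "\<dots> = (h ^^ b) ((h ^^ a) z)" by (simp add: funpow_add)
  finally show ?thesis .
qed

lemma per_orbit_point:
  assumes "per h x p" and "y \<in> {(h ^^ i) x | i. True}"
  shows "((h ^^ a) y = y \<longleftrightarrow> p dvd a)" and "{(h ^^ i) y | i. True} = {(h ^^ i) x | i. True}"
proof -
  obtain i where y: "y = (h ^^ i) x" using assms by auto
  define r where "r = p - i mod p"
  have p0: "p > 0" using assms unfolding per_def by simp
  have "p dvd r + i"
  proof -
    have "i mod p < p" using p0 by simp
    moreover have "p * (i div p) + i mod p = i" by (rule mult_div_mod_eq)
    ultimately have "r + i = p + p * (i div p)" unfolding r_def by linarith
    then show ?thesis by simp
  qed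
  then have "(h ^^ (r + i)) x = x" using per_dvd[OF assms(1), of "r + i"] by simp
  then have hbk: "(h ^^ r) y = x" using y by (simp add: funpow_add)
  show "((h ^^ a) y = y \<longleftrightarrow> p dvd a)"
  proof
    assume "(h ^^ a) y = y"
    then have "(h ^^ a) x = x" using hbk funpow_comm[where h=h and a=a and b=r and z=y] by simp
    then show "p dvd a" using per_dvd[OF assms(1)] by simp
  next
    assume "p dvd a"
    then have "(h ^^ a) x = x" using per_dvd[OF assms(1)] by simp
    then show "(h ^^ a) y = y" using funpow_comm[where h=h and a=a and b=i and z=x] y by simp
  qed
  show "{(h ^^ i) y | i. True} = {(h ^^ i) x | i. True}"
  proof
    show "{(h ^^ i) y | i. True} \<subseteq> {(h ^^ i) x | i. True}"
    proof
      fix z assume "z \<in> {(h ^^ i) y | i. True}"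
      then obtain j where "z = (h ^^ j) y" by auto
      then have "z = (h ^^ (j + i)) x" using y by (simp add: funpow_add)
      then show "z \<in> {(h ^^ i) x | i. True}" by blast
    qed
    show "{(h ^^ i) x | i. True} \<subseteq> {(h ^^ i) y | i. True}"
    proof
      fix z assume "z \<in> {(h ^^ i) x | i. True}"
      then obtain j where "z = (h ^^ j) x" by auto
      then have "z = (h ^^ (j + r)) y" using hbk by (simp add: funpow_add)
      then show "z \<in> {(h ^^ i) y | i. True}" by blast
    qed
  qed
qed




lemma mono_taylor: "\<exists>q. (x + h) ^ Suc i = x ^ Suc i + of_nat (Suc i) * h * x ^ i + h^2 * (q::int)"
proof (induction i)
  case 0 show ?case by (rule exI[of _ 0]) simp
next
  case (Suc i)
  then obtain q where q: "(x + h) ^ Suc i = x ^ Suc i + of_nat (Suc i) * h * x ^ i + h^2 * q" by blast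
  have "(x + h) ^ Suc (Suc i) = (x + h) * (x ^ Suc i + of_nat (Suc i) * h * x ^ i + h^2 * q)"
    using q by simp
  also have "\<dots> = x ^ Suc (Suc i) + of_nat (Suc (Suc i)) * h * x ^ Suc i
        + h^2 * (q * x + of_nat (Suc i) * x ^ i + h * q)"
    by (simp add: algebra_simps power2_eq_square)
  finally show ?case by blast
qed

lemma mono_dvd: "h^2 dvd (x + h) ^ i - x ^ i - of_nat i * h * x ^ (i - 1)" for x h :: int
proof (cases i)
  case 0 then show ?thesis by simp
next
  case (Suc l)
  then obtain q where "(x + h) ^ Suc l = x ^ Suc l + of_nat (Suc l) * h * x ^ l + h^2 * q"
    using mono_taylor by blast
  then show ?thesis using Suc by simp
qed

lemma mono_deriv4: "[of_nat i * (x + 2*d) ^ (i - 1) = of_nat i * x ^ (i - 1)] (mod 4)" for x d :: int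
proof (cases i)
  case 0 then show ?thesis by simp
next
  case (Suc l)
  show ?thesis
  proof (cases l)
    case 0 then show ?thesis using Suc by simp
  next
    case (Suc l')
    obtain q where q: "(x + 2*d) ^ Suc l' = x ^ Suc l' + of_nat (Suc l') * (2*d) * x ^ l' + (2*d)^2 * q"
      using mono_taylor by blast
    have ev: "even ((l' + 2) * (l' + 1))" by simp
    then obtain t where t: "(l' + 2) * (l' + 1) = 2 * t" by blast
    have "(of_nat (l' + 2) :: int) * of_nat (Suc l') = of_nat ((l' + 2) * (l' + 1))"
      by (simp only: of_nat_mult Suc_eq_plus1)
    also have "\<dots> = of_nat (2 * t)" using t by (simp only:)
    also have "\<dots> = 2 * of_nat t" by simp
    finally have t': "(of_nat (l' + 2) :: int) * of_nat (Suc l') = 2 * of_nat t" .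
    have "of_nat i * (x + 2*d) ^ (i - 1) - of_nat i * x ^ (i - 1)
        = of_nat (l' + 2) * (of_nat (Suc l') * (2*d) * x ^ l' + (2*d)^2 * q)"
      using Suc \<open>i = Suc l\<close> q by (simp add: algebra_simps)
    also have "\<dots> = ((of_nat (l' + 2) :: int) * of_nat (Suc l')) * (2 * d * x ^ l') + 4 * (of_nat (l' + 2) * d^2 * q)"
      by (simp add: algebra_simps power2_eq_square)
    also have "\<dots> = (2 * of_nat t) * (2 * d * x ^ l') + 4 * (of_nat (l' + 2) * d^2 * q)"
      by (simp only: t')
    also have "\<dots> = 4 * (of_nat t * d * x ^ l' + of_nat (l' + 2) * d^2 * q)"
      by (simp add: algebra_simps)
    finally show ?thesis by (simp add: cong_iff_dvd_diff)
  qed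
qed

definition PF :: "(nat \<Rightarrow> int) \<Rightarrow> nat \<Rightarrow> int \<Rightarrow> int" where
  "PF c L x = (\<Sum>i<L. c i * x ^ i)"
definition PF' :: "(nat \<Rightarrow> int) \<Rightarrow> nat \<Rightarrow> int \<Rightarrow> int" where
  "PF' c L x = (\<Sum>i<L. c i * (of_nat i * x ^ (i - 1)))"

lemma PF_taylor: "h^2 dvd PF c L (x + h) - PF c L x - h * PF' c L x"
proof -
  have "PF c L (x + h) - PF c L x - h * PF' c L x
      = (\<Sum>i<L. c i * ((x + h) ^ i - x ^ i - of_nat i * h * x ^ (i - 1)))"
  proof -
    have "\<And>i. c i * ((x + h) ^ i - x ^ i - of_nat i * h * x ^ (i - 1))
       = c i * (x + h) ^ i - c i * x ^ i - h * (c i * (of_nat i * x ^ (i - 1)))"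
      by (simp add: algebra_simps)
    then have "(\<Sum>i<L. c i * ((x + h) ^ i - x ^ i - of_nat i * h * x ^ (i - 1)))
       = (\<Sum>i<L. c i * (x + h) ^ i - c i * x ^ i - h * (c i * (of_nat i * x ^ (i - 1))))"
      by (rule sum.cong[OF refl])
    then show ?thesis unfolding PF_def PF'_def by (simp add: sum_subtractf sum_distrib_left)
  qed
  also have "h^2 dvd \<dots>" by (intro dvd_sum dvd_mult mono_dvd)
  finally show ?thesis .
qed

lemma PF_cong: "[x = y] (mod M) \<Longrightarrow> [PF c L x = PF c L y] (mod M)"
  unfolding PF_def by (intro cong_sum cong_mult cong_refl cong_pow)

lemma PF'_cong4: "[PF' c L (x + 2*d) = PF' c L x] (mod 4)"
  unfolding PF'_def by (intro cong_sum cong_mult cong_refl mono_deriv4)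

locale taylor =
  fixes F F' :: "int \<Rightarrow> int"
  assumes T: "h^2 dvd F (x + h) - F x - h * F' x"
    and C: "[x = y] (mod M) \<Longrightarrow> [F x = F y] (mod M)"
    and D4: "[F' (x + 2*d) = F' x] (mod 4)"
begin

definition Dit :: "nat \<Rightarrow> int \<Rightarrow> int" where
  "Dit i x = (\<Prod>l<i. F' ((F ^^ l) x))"

lemma Dit_0[simp]: "Dit 0 x = 1" by (simp add: Dit_def)
lemma Dit_Suc: "Dit (Suc i) x = F' ((F ^^ i) x) * Dit i x"
  by (simp add: Dit_def mult.commute)

lemma iter_cong: "[x = y] (mod M) \<Longrightarrow> [(F ^^ i) x = (F ^^ i) y] (mod M)"
  by (induction i) (auto intro: C)

lemma Dit_cong4: "[x = y] (mod 2) \<Longrightarrow> [Dit i x = Dit i y] (mod 4)"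
proof (induction i)
  case 0 then show ?case by simp
next
  case (Suc i)
  have "[(F ^^ i) x = (F ^^ i) y] (mod 2)" using Suc.prems by (rule iter_cong)
  then obtain d where d: "(F ^^ i) y = (F ^^ i) x + 2 * d" by (auto simp: cong_iff_lin)
  have "[F' ((F ^^ i) x) = F' ((F ^^ i) y)] (mod 4)" using D4[of "(F ^^ i) x" d] d
    by (simp add: cong_sym)
  then show ?case unfolding Dit_Suc using Suc by (intro cong_mult) auto
qed

lemma Dit_add: "Dit (a + b) x = Dit b ((F ^^ a) x) * Dit a x"
proof (induction b)
  case 0 then show ?case by simp
next
  case (Suc b)
  have "(F ^^ (a + b)) x = (F ^^ b) ((F ^^ a) x)" by (simp only: add.commute[of a b] funpow_add comp_apply)
  then show ?case using Suc by (simp add: Dit_Suc)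
qed

lemma iter_taylor: "h^2 dvd (F ^^ i) (x + h) - (F ^^ i) x - h * Dit i x"
proof (induction i)
  case 0 then show ?case by simp
next
  case (Suc i)
  let ?y = "(F ^^ i) x" and ?y' = "(F ^^ i) (x + h)"
  obtain q where q: "?y' - ?y - h * Dit i x = h^2 * q" using Suc by (auto elim: dvdE)
  define h' where "h' = ?y' - ?y"
  have hh: "h' = h * (Dit i x + h * q)" using q unfolding h'_def by (simp add: algebra_simps power2_eq_square)
  have "h'^2 dvd F (?y + h') - F ?y - h' * F' ?y" by (rule T)
  moreover have "h^2 dvd h'^2" unfolding hh by (simp add: power_mult_distrib)
  ultimately have a: "h^2 dvd F (?y + h') - F ?y - h' * F' ?y" by (rule dvd_trans[rotated])
  have e: "h * (F' ?y * Dit i x) = h' * F' ?y - h^2 * (q * F' ?y)"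
    using hh by (simp add: algebra_simps power2_eq_square)
  have ye: "?y' = ?y + h'" by (simp add: h'_def)
  have em: "F ?y' - F ?y - h * (F' ?y * Dit i x) = (F (?y + h') - F ?y - h' * F' ?y) + h^2 * (q * F' ?y)"
    unfolding e ye by simp
  show ?case unfolding Dit_Suc funpow.simps comp_apply em
    by (rule dvd_add[OF a]) simp
qed


lemma iter_fix_mult: "[(F ^^ P) x = x] (mod M) \<Longrightarrow> [(F ^^ (P * c)) x = x] (mod M)"
proof (induction c)
  case 0 then show ?case by simp
next
  case (Suc c)
  have e: "P * Suc c = P * c + P" by simp
  have "(F ^^ (P * Suc c)) x = (F ^^ (P * c)) ((F ^^ P) x)" by (simp only: e funpow_add comp_apply)
  moreover have "[(F ^^ (P * c)) ((F ^^ P) x) = (F ^^ (P * c)) x] (mod M)"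
    using Suc.prems by (rule iter_cong)
  ultimately show ?case using Suc cong_trans by simp
qed

lemma Dit_mult:
  assumes "[(F ^^ P) x = x] (mod 2)" "[Dit P x = 1] (mod 4)"
  shows "[Dit (P * c) x = 1] (mod 4)"
proof (induction c)
  case 0 then show ?case by simp
next
  case (Suc c)
  have e: "P * Suc c = P * c + P" by simp
  have "[(F ^^ (P * c)) x = x] (mod 2)" using assms(1) by (rule iter_fix_mult)
  then have "[Dit P ((F ^^ (P * c)) x) = Dit P x] (mod 4)" by (rule Dit_cong4)
  then have "[Dit P ((F ^^ (P * c)) x) = 1] (mod 4)" using assms(2) by (rule cong_trans)
  then have "[Dit P ((F ^^ (P * c)) x) * Dit (P * c) x = 1 * 1] (mod 4)"
    using Suc by (intro cong_mult)
  then show ?case unfolding e Dit_add by simp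
qed

lemma odd_sq4: "odd (D::int) \<Longrightarrow> [D * D = 1] (mod 4)"
proof -
  assume "odd D"
  then obtain e where "D = 2 * e + 1" by (rule oddE)
  then have "D * D - 1 = 4 * (e * e + e)" by (simp add: algebra_simps)
  then show ?thesis by (simp add: cong_iff_dvd_diff)
qed

lemma sigma_step:
  assumes n1: "n \<ge> 1" and c1: "[(F ^^ k) x = x] (mod 2^n)"
    and c2: "[(F ^^ (2*k)) x = x] (mod 2^(n+1))" and c3: "\<not> [(F ^^ k) x = x] (mod 2^(n+1))"
  shows "[Dit (2*k) x = 1] (mod 4)"
proof -
  obtain n' where n': "n = Suc n'" using n1 by (cases n) auto
  define Q :: int where "Q = 2^n'"
  have Q: "2^n = 2 * Q" unfolding Q_def n' by simp
  have Q2: "(2::int)^(n+1) = 4 * Q" using Q by simp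
  obtain b where Fk: "(F ^^ k) x = x + 2^n * b" using cong_sym[OF c1] unfolding cong_iff_lin by blast
  have ob: "odd b"
  proof
    assume "even b"
    then obtain c where "b = 2 * c" by blast
    then have "(F ^^ k) x = x + 2^(n+1) * c" using Fk by simp
    then have "[(F ^^ k) x = x] (mod 2^(n+1))" by (simp add: cong_iff_dvd_diff)
    then show False using c3 by simp
  qed
  define D where "D = Dit k x"
  obtain r where r: "(F ^^ k) (x + 2^n * b) - (F ^^ k) x - 2^n * b * D = (2^n * b)^2 * r"
    using iter_taylor[where i=k and h="2^n * b" and x=x] unfolding D_def by (auto elim: dvdE)
  have F2: "(F ^^ (2*k)) x = (F ^^ k) (x + 2^n * b)"
    using Fk by (simp add: mult_2 funpow_add)
  obtain s where s: "(F ^^ (2*k)) x = x + 2^(n+1) * s" using cong_sym[OF c2] unfolding cong_iff_lin by blast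
  have "x + 4 * Q * s - (x + 2 * Q * b) - 2 * Q * b * D = (2 * Q * b)^2 * r"
    using r F2 s Fk Q Q2 by simp
  then have "2 * Q * (b * (1 + D)) = 4 * Q * (s - Q * b^2 * r)"
    by (simp add: algebra_simps power2_eq_square)
  moreover have "Q \<noteq> 0" unfolding Q_def by simp
  ultimately have "b * (1 + D) = 2 * (s - Q * b^2 * r)" by simp
  then have "even (b * (1 + D))" by simp
  then have oD: "odd D" using ob by simp
  have "(2::int) dvd 2^n" unfolding n' by simp
  with c1 have "[(F ^^ k) x = x] (mod 2)" by (rule cong_dvd_modulus)
  then have "[Dit k ((F ^^ k) x) = D] (mod 4)" unfolding D_def by (rule Dit_cong4)
  then have "[Dit k ((F ^^ k) x) * D = D * D] (mod 4)" by (intro cong_mult cong_refl)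
  moreover have "[D * D = 1] (mod 4)" using oD by (rule odd_sq4)
  ultimately have "[Dit k ((F ^^ k) x) * D = 1] (mod 4)" by (rule cong_trans)
  then show ?thesis unfolding mult_2 Dit_add D_def .
qed

lemma tau_step:
  assumes j2: "j \<ge> 2" and FP: "(F ^^ P) x = x + 2^j * b" and ob: "odd b"
    and D1: "[Dit P x = 1] (mod 4)"
  shows "\<exists>b'. (F ^^ (2*P)) x = x + 2^(j+1) * b' \<and> odd b'" and "[Dit (2*P) x = 1] (mod 4)"
proof -
  obtain j' where j': "j = Suc (Suc j')" using j2 by (metis add_2_eq_Suc le_iff_add add.commute)
  define Q :: int where "Q = 2^(Suc j')"
  have Q: "2^j = 2 * Q" unfolding Q_def j' by simp
  have eQ: "even Q" unfolding Q_def by simp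
  have Q2: "(2::int)^(j+1) = 4 * Q" using Q by simp
  define D where "D = Dit P x"
  obtain e where e: "D = 1 + 4 * e" using cong_sym[OF D1] unfolding D_def cong_iff_lin by blast
  obtain r where r: "(F ^^ P) (x + 2^j * b) - (F ^^ P) x - 2^j * b * D = (2^j * b)^2 * r"
    using iter_taylor[where i=P and h="2^j * b" and x=x] unfolding D_def by (auto elim: dvdE)
  have F2: "(F ^^ (2*P)) x = (F ^^ P) (x + 2^j * b)"
    using FP by (simp add: mult_2 funpow_add)
  have "(F ^^ (2*P)) x = x + 2 * Q * b + 2 * Q * b * (1 + 4 * e) + (2 * Q * b)^2 * r"
    using r F2 FP Q e by (simp add: algebra_simps)
  also have "\<dots> = x + 4 * Q * (b * (1 + 2 * e) + Q * b^2 * r)"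
    by (simp add: algebra_simps power2_eq_square)
  finally have "(F ^^ (2*P)) x = x + 2^(j+1) * (b * (1 + 2 * e) + Q * b^2 * r)" using Q2 by simp
  moreover have "odd (b * (1 + 2 * e) + Q * b^2 * r)" using ob eQ by simp
  ultimately show "\<exists>b'. (F ^^ (2*P)) x = x + 2^(j+1) * b' \<and> odd b'" by blast
  have "[(F ^^ P) x = x] (mod 2)" using FP Q by (simp add: cong_iff_dvd_diff)
  then have "[Dit P ((F ^^ P) x) = D] (mod 4)" unfolding D_def by (rule Dit_cong4)
  then have "[Dit P ((F ^^ P) x) * D = 1 * 1] (mod 4)" using D1 unfolding D_def
    by (intro cong_mult) (auto intro: cong_trans)
  then show "[Dit (2*P) x = 1] (mod 4)" unfolding mult_2 Dit_add D_def by simp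
qed
end




lemma Z2_mod: "is_Z2 a \<Longrightarrow> j \<le> N \<Longrightarrow> a N mod 2^j = a j"
proof (induction N)
  case 0
  then have "0 \<le> a 0" "a 0 < 1" unfolding is_Z2_def by (metis power_0)+
  then show ?case using 0 by simp
next
  case (Suc N)
  show ?case
  proof (cases "j = Suc N")
    case True
    have "0 \<le> a (Suc N)" "a (Suc N) < 2^Suc N" using Suc.prems(1) unfolding is_Z2_def by blast+
    then show ?thesis using True by (simp only: mod_pos_pos_trivial)
  next
    case False
    then have jN: "j \<le> N" using Suc.prems by simp
    have "(2::int)^j dvd 2^N" using jN by (rule le_imp_power_dvd)
    then have "a (Suc N) mod 2^j = (a (Suc N) mod 2^N) mod 2^j" by (simp add: mod_mod_cancel)
    also have "\<dots> = a N mod 2^j" using Suc.prems(1) unfolding is_Z2_def by simp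
    also have "\<dots> = a j" using Suc.IH[OF Suc.prems(1) jN] .
    finally show ?thesis .
  qed
qed

lemma fmap_F:
  assumes "is_Z2_poly f" "j \<le> N"
  shows "fmap f j x = PF (\<lambda>i. (f!i) N) (length f) x mod 2^j"
proof -
  have "[(\<Sum>i<length f. (f!i) j * x^i) = (\<Sum>i<length f. (f!i) N * x^i)] (mod 2^j)"
  proof (rule cong_sum, rule cong_mult[OF _ cong_refl])
    fix i assume "i \<in> {..<length f}"
    then have z: "is_Z2 (f!i)" using assms(1) unfolding is_Z2_poly_def by simp
    have "(f!i) N mod 2^j = (f!i) j" using Z2_mod[OF z assms(2)] .
    moreover have "(f!i) j mod 2^j = (f!i) j" using z unfolding is_Z2_def by (simp add: mod_pos_pos_trivial)
    ultimately show "[(f!i) j = (f!i) N] (mod 2^j)" unfolding cong_def by simp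
  qed
  then show ?thesis unfolding fmap_def PF_def cong_def .
qed

lemma fmap_iter:
  assumes "is_Z2_poly f" "j \<le> N"
  shows "(fmap f j ^^ i) (x mod 2^j) = (PF (\<lambda>i. (f!i) N) (length f) ^^ i) x mod 2^j"
proof (induction i)
  case 0 then show ?case by simp
next
  case (Suc i)
  let ?F = "PF (\<lambda>i. (f!i) N) (length f)"
  have "(fmap f j ^^ Suc i) (x mod 2^j) = fmap f j ((fmap f j ^^ i) (x mod 2^j))" by simp
  also have "\<dots> = fmap f j ((?F ^^ i) x mod 2^j)" using Suc by simp
  also have "\<dots> = ?F ((?F ^^ i) x mod 2^j) mod 2^j" by (rule fmap_F[OF assms])
  also have "\<dots> = ?F ((?F ^^ i) x) mod 2^j"
    using PF_cong[of "(?F ^^ i) x mod 2^j" "(?F ^^ i) x" "2^j"] unfolding cong_def by simp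
  finally show ?case by simp
qed

lemma fmap_range: "0 \<le> fmap f j x \<and> fmap f j x < 2^j"
  unfolding fmap_def by simp

lemma fmap_iter_range: "0 \<le> z \<Longrightarrow> z < 2^j \<Longrightarrow> 0 \<le> (fmap f j ^^ i) z \<and> (fmap f j ^^ i) z < 2^j"
  by (cases i) (simp_all add: fmap_range)

lemma lift_card:
  assumes "finite S" "S \<subseteq> {y. 0 \<le> y \<and> y < 2^n}"
  shows "finite (lift_set n S) \<and> card (lift_set n S) = 2 * card S"
proof -
  have eq: "lift_set n S = S \<union> (\<lambda>y. y + 2^n) ` S"
  proof
    show "lift_set n S \<subseteq> S \<union> (\<lambda>y. y + 2^n) ` S"
    proof
      fix y assume y: "y \<in> lift_set n S"
      then have y0: "0 \<le> y" "y < 2^Suc n" "y mod 2^n \<in> S" unfolding lift_set_def by auto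
      show "y \<in> S \<union> (\<lambda>y. y + 2^n) ` S"
      proof (cases "y < 2^n")
        case True
        then have "y mod 2^n = y" using y0 by (simp add: mod_pos_pos_trivial)
        then show ?thesis using y0 by simp
      next
        case False
        define r where "r = y - 2^n"
        have r: "0 \<le> r" "r < 2^n" using False y0 unfolding r_def by auto
        have "y mod 2^n = r" unfolding r_def using r
          by (metis add.commute diff_add_cancel mod_add_self2 mod_pos_pos_trivial r_def)
        then have "r \<in> S" using y0 by simp
        moreover have "y = r + 2^n" unfolding r_def by simp
        ultimately show ?thesis by blast
      qed
    qed
    show "S \<union> (\<lambda>y. y + 2^n) ` S \<subseteq> lift_set n S"
    proof
      fix y assume "y \<in> S \<union> (\<lambda>y. y + 2^n) ` S"
      then consider "y \<in> S" | y' where "y' \<in> S" "y = y' + 2^n" by blast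
      then show "y \<in> lift_set n S"
      proof cases
        case 1
        then have "0 \<le> y" "y < 2^n" using assms(2) by auto
        then show ?thesis using 1 unfolding lift_set_def by (simp add: mod_pos_pos_trivial)
      next
        case 2
        then have "0 \<le> y'" "y' < 2^n" using assms(2) by auto
        then show ?thesis using 2 unfolding lift_set_def by (simp add: mod_pos_pos_trivial)
      qed
    qed
  qed
  have disj: "S \<inter> (\<lambda>y. y + 2^n) ` S = {}"
  proof (rule ccontr)
    assume "S \<inter> (\<lambda>y. y + 2^n) ` S \<noteq> {}"
    then obtain y y' where "y \<in> S" "y' \<in> S" "y = y' + 2^n" by blast
    moreover have "y < 2^n" "0 \<le> y'" using assms(2) \<open>y \<in> S\<close> \<open>y' \<in> S\<close> by auto
    ultimately show False by simp
  qed
  have inj: "inj_on (\<lambda>y::int. y + 2^n) S" by (rule inj_onI) simp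
  show ?thesis unfolding eq using assms(1) disj card_Un_disjoint[of S "(\<lambda>y. y + 2^n) ` S"]
    card_image[OF inj] by simp
qed




lemma cycle_unpack:
  assumes "is_cycle f j S"
  shows "\<exists>z p. 0 \<le> z \<and> z < 2^j \<and> per (fmap f j) z p \<and> S = {(fmap f j ^^ i) z | i. True}"
proof -
  obtain x k where x: "0 \<le> x" "x < 2^j" "k > 0" "(fmap f j ^^ k) x = x" and S: "S = {(fmap f j ^^ i) x | i. True}"
    using assms unfolding is_cycle_def by blast
  obtain p where "per (fmap f j) x p" using per_exists[OF x(4) x(3)] by blast
  then show ?thesis using x S by blast
qed

lemma cycle_range: "is_cycle f j S \<Longrightarrow> y \<in> S \<Longrightarrow> 0 \<le> y \<and> y < 2^j"
  unfolding is_cycle_def using fmap_iter_range by blast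

lemma per_finite: "per h x p \<Longrightarrow> finite {(h ^^ i) x | i. True}"
  using per_orbit_image by (metis finite_imageI finite_lessThan)

theorem corollary3p9:
  fixes f :: "(nat \<Rightarrow> int) list" and n m :: nat and \<sigma> \<tau> :: "int set"
  assumes "is_Z2_poly f"
    and "n \<ge> 1"
    and "is_cycle f n \<sigma>"
    and "grows f n \<sigma>"
    and "m > n"
    and "lies_above f n \<sigma> m \<tau>"
    and "grows f m \<tau>"
  shows "\<forall>m'>m. \<forall>\<rho>. lies_above f m \<tau> m' \<rho> \<longrightarrow> grows f m' \<rho>"
proof (intro allI impI)
  fix m' \<rho> assume mm: "m' > m" and la: "lies_above f m \<tau> m' \<rho>"
  define N where "N = Suc m'"
  define F where "F = PF (\<lambda>i. (f!i) N) (length f)"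
  define F' where "F' = PF' (\<lambda>i. (f!i) N) (length f)"
  interpret taylor F F' unfolding F_def F'_def
    by unfold_locales (rule PF_taylor, erule PF_cong, rule PF'_cong4)
  have it: "\<And>j i x. j \<le> N \<Longrightarrow> (fmap f j ^^ i) (x mod 2^j) = (F ^^ i) x mod 2^j"
    unfolding F_def by (rule fmap_iter[OF assms(1)])
  have itr: "\<And>j i x. j \<le> N \<Longrightarrow> 0 \<le> x \<Longrightarrow> x < 2^j \<Longrightarrow> ((fmap f j ^^ i) x = x \<longleftrightarrow> [(F ^^ i) x = x] (mod 2^j))"
  proof -
    fix j i x assume j: "j \<le> N" and x: "0 \<le> x" "x < (2::int)^j"
    have xm: "x mod 2^j = x" using x by (simp add: mod_pos_pos_trivial)
    show "(fmap f j ^^ i) x = x \<longleftrightarrow> [(F ^^ i) x = x] (mod 2^j)"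
      using it[OF j, of i x] unfolding xm cong_def by (simp add: xm)
  qed
  have n1: "n \<ge> 1" and nm: "n < m" using assms(2,5) by auto
  have mN: "m \<le> N" "Suc m \<le> N" "Suc n \<le> N" "n \<le> N" using mm nm unfolding N_def by auto
  obtain zs k where pk: "per (fmap f n) zs k" and seq: "\<sigma> = {(fmap f n ^^ i) zs | i. True}"
    using cycle_unpack[OF assms(3)] by blast
  have k0: "k > 0" using pk unfolding per_def by simp
  have cards: "card \<sigma> = k" using per_card[OF pk] seq by simp
  have lc: "is_cycle f (Suc n) (lift_set n \<sigma>)" and cl: "card (lift_set n \<sigma>) = 2 * card \<sigma>"
    using assms(4) unfolding grows_def by auto
  obtain w pw where pw: "per (fmap f (Suc n)) w pw" and leq: "lift_set n \<sigma> = {(fmap f (Suc n) ^^ i) w | i. True}"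
    using cycle_unpack[OF lc] by blast
  have pw2: "pw = 2 * k" using per_card[OF pw] leq cl cards by simp
  have ct: "is_cycle f m \<tau>" and above: "\<forall>y\<in>\<tau>. y mod 2^n \<in> \<sigma>"
    using assms(6) unfolding lies_above_def by auto
  obtain x0 K where x0: "0 \<le> x0" "x0 < 2^m" and pK: "per (fmap f m) x0 K"
    and teq: "\<tau> = {(fmap f m ^^ i) x0 | i. True}"
    using cycle_unpack[OF ct] by blast
  have K0: "K > 0" using pK unfolding per_def by simp
  have cardt: "card \<tau> = K" using per_card[OF pK] teq by simp
  have x0t: "x0 \<in> \<tau>" unfolding teq by (rule CollectI, rule exI[of _ 0]) simp
  have a1: "[(F ^^ k) x0 = x0] (mod 2^n)"
  proof -
    have "x0 mod 2^n \<in> \<sigma>" using above x0t by blast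
    then have "(fmap f n ^^ k) (x0 mod 2^n) = x0 mod 2^n"
      using per_orbit_point(1)[OF pk, of "x0 mod 2^n" k] seq by simp
    then show ?thesis using it[OF mN(4), of k x0] unfolding cong_def by simp
  qed
  have b: "\<And>a. [(F ^^ a) x0 = x0] (mod 2^Suc n) \<longleftrightarrow> 2 * k dvd a"
  proof -
    fix a
    have "(2::int)^n dvd 2^Suc n" by simp
    then have "(x0 mod 2^Suc n) mod 2^n = x0 mod 2^n" by (simp add: mod_mod_cancel)
    then have "x0 mod 2^Suc n \<in> lift_set n \<sigma>" using above x0t unfolding lift_set_def by simp
    then have "(fmap f (Suc n) ^^ a) (x0 mod 2^Suc n) = x0 mod 2^Suc n \<longleftrightarrow> 2 * k dvd a"
      using per_orbit_point(1)[OF pw, of "x0 mod 2^Suc n" a] leq pw2 by simp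
    then show "[(F ^^ a) x0 = x0] (mod 2^Suc n) \<longleftrightarrow> 2 * k dvd a"
      using it[OF mN(3), of a x0] unfolding cong_def by simp
  qed
  have Ds: "[Dit (2*k) x0 = 1] (mod 4)"
  proof (rule sigma_step[OF n1 a1])
    show "[(F ^^ (2 * k)) x0 = x0] (mod 2 ^ (n + 1))" using b[of "2*k"] by simp
    have "\<not> 2 * k dvd k" using k0 by (simp add: nat_dvd_not_less)
    then show "\<not> [(F ^^ k) x0 = x0] (mod 2 ^ (n + 1))" using b[of k] by simp
  qed
  have cK: "[(F ^^ K) x0 = x0] (mod 2^m)"
    using itr[OF mN(1) x0, of K] pK unfolding per_def by simp
  have "(2::int)^Suc n dvd 2^m" by (rule le_imp_power_dvd) (use nm in simp)
  then have "[(F ^^ K) x0 = x0] (mod 2^Suc n)" using cK cong_dvd_modulus by blast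
  then have "2 * k dvd K" using b by simp
  then obtain c where Kc: "K = 2 * k * c" by blast
  have "[(F ^^ (2*k)) x0 = x0] (mod 2^Suc n)" using b by simp
  moreover have "(2::int) dvd 2^Suc n" by simp
  ultimately have F2k: "[(F ^^ (2*k)) x0 = x0] (mod 2)" using cong_dvd_modulus by blast
  have DK: "[Dit K x0 = 1] (mod 4)" unfolding Kc by (rule Dit_mult[OF F2k Ds])
  have lc2: "is_cycle f (Suc m) (lift_set m \<tau>)" and cl2: "card (lift_set m \<tau>) = 2 * card \<tau>"
    using assms(7) unfolding grows_def by auto
  obtain w2 p2 where pw2': "per (fmap f (Suc m)) w2 p2" and leq2: "lift_set m \<tau> = {(fmap f (Suc m) ^^ i) w2 | i. True}"
    using cycle_unpack[OF lc2] by blast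
  have p22: "p2 = 2 * K" using per_card[OF pw2'] leq2 cl2 cardt by simp
  have x0r2: "0 \<le> x0" "x0 < 2^Suc m" using x0 by auto
  have "x0 mod 2^m = x0" using x0 by (simp add: mod_pos_pos_trivial)
  then have "x0 \<in> lift_set m \<tau>" using x0r2 x0t unfolding lift_set_def by simp
  then have "(fmap f (Suc m) ^^ K) x0 \<noteq> x0"
    using per_orbit_point(1)[OF pw2', of x0 K] leq2 p22 K0 by (simp add: nat_dvd_not_less)
  then have ncK: "\<not> [(F ^^ K) x0 = x0] (mod 2^Suc m)" using itr[OF mN(2) x0r2, of K] by simp
  obtain b0 where b0: "(F ^^ K) x0 = x0 + 2^m * b0"
    using cong_sym[OF cK] unfolding cong_iff_lin by blast
  have ob0: "odd b0"
  proof
    assume "even b0"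
    then obtain c where "b0 = 2 * c" by blast
    then have "(F ^^ K) x0 = x0 + 2^Suc m * c" using b0 by simp
    then have "[(F ^^ K) x0 = x0] (mod 2^Suc m)" by (simp add: cong_iff_dvd_diff)
    then show False using ncK by simp
  qed
  have m2: "m \<ge> 2" using n1 nm by simp
  have ind: "\<And>e. \<exists>b. (F ^^ (K * 2^e)) x0 = x0 + 2^(m+e) * b \<and> odd b \<and> [Dit (K * 2^e) x0 = 1] (mod 4)"
  proof -
    fix e show "\<exists>b. (F ^^ (K * 2^e)) x0 = x0 + 2^(m+e) * b \<and> odd b \<and> [Dit (K * 2^e) x0 = 1] (mod 4)"
    proof (induction e)
      case 0 then show ?case using b0 ob0 DK by simp
    next
      case (Suc e)
      then obtain b where bb: "(F ^^ (K * 2^e)) x0 = x0 + 2^(m+e) * b" "odd b" "[Dit (K * 2^e) x0 = 1] (mod 4)"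
        by blast
      have j2: "m + e \<ge> 2" using m2 by simp
      have e2: "K * 2^Suc e = 2 * (K * 2^e)" by simp
      show ?case unfolding e2 using tau_step[OF j2 bb] by simp
    qed
  qed
  have lev: "\<And>e. m + e \<le> N \<Longrightarrow> per (fmap f (m+e)) x0 (K * 2^e)"
  proof -
    fix e assume jN: "m + e \<le> N"
    have x0j: "0 \<le> x0" "x0 < 2^(m+e)" using x0 by (auto intro: less_le_trans)
    have eqj: "\<And>a. (fmap f (m+e) ^^ a) x0 = x0 \<longleftrightarrow> [(F ^^ a) x0 = x0] (mod 2^(m+e))"
      using itr[OF jN x0j] by blast
    have eqm: "\<And>a. (fmap f m ^^ a) x0 = x0 \<longleftrightarrow> [(F ^^ a) x0 = x0] (mod 2^m)"
      using itr[OF mN(1) x0] by blast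
    obtain b where bb: "(F ^^ (K * 2^e)) x0 = x0 + 2^(m+e) * b" "odd b" using ind by blast
    have fixP: "(fmap f (m+e) ^^ (K * 2^e)) x0 = x0" using eqj bb by (simp add: cong_iff_dvd_diff)
    have P0: "K * 2^e > 0" using K0 by simp
    obtain pj where pj: "per (fmap f (m+e)) x0 pj" using per_exists[OF fixP P0] by blast
    have d1: "pj dvd K * 2^e" using per_dvd[OF pj] fixP by simp
    have "(fmap f (m+e) ^^ pj) x0 = x0" using pj unfolding per_def by simp
    then have "[(F ^^ pj) x0 = x0] (mod 2^(m+e))" using eqj by simp
    moreover have "(2::int)^m dvd 2^(m+e)" by (simp add: le_imp_power_dvd)
    ultimately have "[(F ^^ pj) x0 = x0] (mod 2^m)" using cong_dvd_modulus by blast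
    then have "K dvd pj" using per_dvd[OF pK] eqm by simp
    then obtain t where t: "pj = K * t" by blast
    have "t dvd 2^e" using d1 t K0 by simp
    then obtain i where i: "i \<le> e" "t = 2^i" using divides_primepow_nat[of 2] by auto
    show "per (fmap f (m+e)) x0 (K * 2^e)"
    proof (cases "i = e")
      case True then show ?thesis using pj t i by simp
    next
      case False
      then obtain e'' where e'': "e = Suc e''" "i \<le> e''" using i by (cases e) auto
      have "pj dvd K * 2^e''" using t i e'' by (simp add: le_imp_power_dvd)
      then have "(fmap f (m+e) ^^ (K * 2^e'')) x0 = x0" using per_dvd[OF pj] by simp
      then have c1: "[(F ^^ (K * 2^e'')) x0 = x0] (mod 2^(m+e))" using eqj by simp
      obtain b' where bb': "(F ^^ (K * 2^e'')) x0 = x0 + 2^(m+e'') * b'" "odd b'" using ind by blast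
      have "2^(m+e'') * 2 dvd 2^(m+e'') * (b'::int)" using c1 bb' e''
        by (simp add: cong_iff_dvd_diff mult.commute)
      then have "2 dvd b'" by simp
      then show ?thesis using bb' by simp
    qed
  qed
  define U where "U j = {y. 0 \<le> y \<and> y < 2^j \<and> y mod 2^m \<in> \<tau>}" for j
  have Ulift: "\<And>j. m \<le> j \<Longrightarrow> U (Suc j) = lift_set j (U j)"
  proof -
    fix j assume mj: "m \<le> j"
    have "(2::int)^m dvd 2^j" using mj by (simp add: le_imp_power_dvd)
    then have "\<And>y::int. (y mod 2^j) mod 2^m = y mod 2^m" by (simp add: mod_mod_cancel)
    then show "U (Suc j) = lift_set j (U j)" unfolding U_def lift_set_def by auto
  qed
  have finT: "finite \<tau>" using per_finite[OF pK] teq by simp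
  have Um: "U m = \<tau>"
  proof
    show "U m \<subseteq> \<tau>" unfolding U_def by (auto simp: mod_pos_pos_trivial)
    show "\<tau> \<subseteq> U m"
    proof
      fix y assume y: "y \<in> \<tau>"
      then have "0 \<le> y" "y < 2^m" using cycle_range[OF ct] by auto
      then show "y \<in> U m" using y unfolding U_def by (simp add: mod_pos_pos_trivial)
    qed
  qed
  have Ucard: "\<And>e. finite (U (m+e)) \<and> card (U (m+e)) = K * 2^e"
  proof -
    fix e show "finite (U (m+e)) \<and> card (U (m+e)) = K * 2^e"
    proof (induction e)
      case 0 then show ?case using Um finT cardt by simp
    next
      case (Suc e)
      have sub: "U (m+e) \<subseteq> {y. 0 \<le> y \<and> y < 2^(m+e)}" unfolding U_def by auto
      have "U (m + Suc e) = lift_set (m+e) (U (m+e))" using Ulift[of "m+e"] by simp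
      then show ?case using lift_card[OF _ sub] Suc by simp
    qed
  qed
  have OU: "\<And>e. m + e \<le> N \<Longrightarrow> {(fmap f (m+e) ^^ i) x0 | i. True} = U (m+e)"
  proof -
    fix e assume jN: "m + e \<le> N"
    have x0j: "0 \<le> x0" "x0 < 2^(m+e)" using x0 by (auto intro: less_le_trans)
    have sub: "{(fmap f (m+e) ^^ i) x0 | i. True} \<subseteq> U (m+e)"
    proof
      fix y assume "y \<in> {(fmap f (m+e) ^^ i) x0 | i. True}"
      then obtain i where y: "y = (fmap f (m+e) ^^ i) x0" by blast
      have r: "0 \<le> y" "y < 2^(m+e)" using fmap_iter_range[OF x0j] y by auto
      have x0e: "x0 mod 2^(m+e) = x0" "x0 mod 2^m = x0" using x0 x0j by (simp_all add: mod_pos_pos_trivial)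
      have "y = (F ^^ i) x0 mod 2^(m+e)" using it[OF jN, of i x0] y x0e by simp
      moreover have "(2::int)^m dvd 2^(m+e)" by (simp add: le_imp_power_dvd)
      ultimately have "y mod 2^m = (F ^^ i) x0 mod 2^m" by (simp add: mod_mod_cancel)
      also have "\<dots> = (fmap f m ^^ i) x0" using it[OF mN(1), of i x0] x0e by simp
      finally have "y mod 2^m \<in> \<tau>" unfolding teq by blast
      then show "y \<in> U (m+e)" using r unfolding U_def by simp
    qed
    have "card {(fmap f (m+e) ^^ i) x0 | i. True} = K * 2^e" using per_card[OF lev[OF jN]] .
    then show "{(fmap f (m+e) ^^ i) x0 | i. True} = U (m+e)"
      using card_subset_eq[OF _ sub] Ucard[of e] by simp
  qed
  define e0 where "e0 = m' - m"
  have e0: "m + e0 = m'" "m + Suc e0 = N" using mm unfolding e0_def N_def by auto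
  have cr: "is_cycle f m' \<rho>" and abr: "\<forall>y\<in>\<rho>. y mod 2^m \<in> \<tau>" using la unfolding lies_above_def by auto
  obtain z pz where pz: "per (fmap f m') z pz" and req: "\<rho> = {(fmap f m' ^^ i) z | i. True}"
    using cycle_unpack[OF cr] by blast
  have rU: "\<rho> \<subseteq> U m'"
  proof
    fix y assume y: "y \<in> \<rho>"
    then show "y \<in> U m'" using cycle_range[OF cr y] abr unfolding U_def by auto
  qed
  have O0: "{(fmap f m' ^^ i) x0 | i. True} = U m'" using OU[of e0] e0 by simp
  have zr: "z \<in> \<rho>" unfolding req by (rule CollectI, rule exI[of _ 0]) simp
  have zO: "z \<in> {(fmap f m' ^^ i) x0 | i. True}" using zr rU O0 by blast
  have lev0: "per (fmap f m') x0 (K * 2^e0)" using lev[of e0] e0 by simp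
  have rhoU: "\<rho> = U m'" using per_orbit_point(2)[OF lev0 zO] req O0 by simp
  have "lift_set m' \<rho> = U (Suc m')" using Ulift[of m'] mm rhoU by simp
  also have "\<dots> = {(fmap f (Suc m') ^^ i) x0 | i. True}" using OU[of "Suc e0"] e0 N_def by simp
  finally have lr: "lift_set m' \<rho> = {(fmap f (Suc m') ^^ i) x0 | i. True}" .
  have levS: "per (fmap f (Suc m')) x0 (K * 2^Suc e0)" using lev[of "Suc e0"] e0 N_def by simp
  have "is_cycle f (Suc m') (lift_set m' \<rho>)"
    unfolding is_cycle_def lr
  proof (rule exI[of _ x0], intro conjI)
    show "0 \<le> x0" using x0 by simp
    have "(2::int)^m \<le> 2^Suc m'" by (rule power_increasing) (use mm in simp_all)
    with x0 show "x0 < 2^Suc m'" by linarith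
    show "\<exists>k>0. (fmap f (Suc m') ^^ k) x0 = x0" using levS unfolding per_def by blast
  qed simp
  moreover have "card (lift_set m' \<rho>) = 2 * card \<rho>"
  proof -
    have "finite \<rho>" using rhoU Ucard[of e0] e0 by simp
    moreover have "\<rho> \<subseteq> {y. 0 \<le> y \<and> y < 2^m'}" using rhoU unfolding U_def by auto
    ultimately show ?thesis using lift_card by blast
  qed
  ultimately show "grows f m' \<rho>" unfolding grows_def by blast
qed


end
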